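(* Let $G$ and $H$ be ordered graphs, each with $m$ edges, and suppose $M_{1,G}=M_{1,H}$ in $\mathbb C^m$. Then the edge bijection sending the $k$-th edge of $G$ to the $k$-th edge of $H$ (for $k=1,\dots,m$) is a cycle isomorphism.
   Context: An ordered graph is a finite vertex set with a sequence $(E_1,\dots,E_m)$ of distinct unordered pairs of distinct vertices. For a configuration $\mathbf p$ assigning $\mathbf p_i\in\mathbb C$ to each vertex, $m_G(\mathbf p)\in\mathbb C^m$ has $k$-th coordinate $(\mathbf p_i-\mathbf p_j)^2$ with $E_k=\{i,j\}$; $M_{1,G}$ is the Zariski closure of the image of $m_G$. A set of edges is cycle supported if its edges, in some order, form a simple cycle. An edge bijection between two graphs is a cycle isomorphism if a set of edges is cycle supported exactly when its image is cycle supported. *)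

theory Defs
  imports Complex_Main
begin

text \<open>Each edge is stored as a pair (i,j) of distinct vertices standing for the
  unordered pair {i,j}; the unordered pairs of the list are pairwise distinct.\<close>

definition ordered_graph :: "'a set \<Rightarrow> ('a \<times> 'a) list \<Rightarrow> bool" where
  "ordered_graph V E \<longleftrightarrow> finite V \<and>
     (\<forall>(i,j)\<in>set E. i \<in> V \<and> j \<in> V \<and> i \<noteq> j) \<and>
     distinct (map (\<lambda>(i,j). {i,j}) E)"

definition uedge :: "('a \<times> 'a) list \<Rightarrow> nat \<Rightarrow> 'a set" where
  "uedge E k = {fst (E ! k), snd (E ! k)}"

text \<open>The measurement map m_G : configurations \<rightarrow> C^m (points of C^m are lists of length m).\<close>
definition meas_map :: "('a \<times> 'a) list \<Rightarrow> ('a \<Rightarrow> complex) \<Rightarrow> complex list" where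
  "meas_map E p = map (\<lambda>(i,j). (p i - p j)^2) E"

definition meas_image :: "'a set \<Rightarrow> ('a \<times> 'a) list \<Rightarrow> complex list set" where
  "meas_image V E = {meas_map E p | p. \<forall>v. v \<notin> V \<longrightarrow> p v = 0}"

inductive_set poly_fun :: "nat \<Rightarrow> (complex list \<Rightarrow> complex) set" for m :: nat where
  pf_const: "(\<lambda>x. c) \<in> poly_fun m"
| pf_var: "i < m \<Longrightarrow> (\<lambda>x. x ! i) \<in> poly_fun m"
| pf_add: "f \<in> poly_fun m \<Longrightarrow> g \<in> poly_fun m \<Longrightarrow> (\<lambda>x. f x + g x) \<in> poly_fun m"
| pf_mult: "f \<in> poly_fun m \<Longrightarrow> g \<in> poly_fun m \<Longrightarrow> (\<lambda>x. f x * g x) \<in> poly_fun m"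

definition zariski_closure :: "nat \<Rightarrow> complex list set \<Rightarrow> complex list set" where
  "zariski_closure m S = {x. length x = m \<and>
     (\<forall>f\<in>poly_fun m. (\<forall>y\<in>S. f y = 0) \<longrightarrow> f x = 0)}"

definition M1 :: "'a set \<Rightarrow> ('a \<times> 'a) list \<Rightarrow> complex list set" where
  "M1 V E = zariski_closure (length E) (meas_image V E)"

definition cycle_supported :: "'a set set \<Rightarrow> bool" where
  "cycle_supported S \<longleftrightarrow> (\<exists>vs. length vs \<ge> 3 \<and> distinct vs \<and>
     S = {{vs ! i, vs ! ((i + 1) mod length vs)} | i. i < length vs})"

definition index_cycle_iso :: "('a \<times> 'a) list \<Rightarrow> ('b \<times> 'b) list \<Rightarrow> bool" where
  "index_cycle_iso EG EH \<longleftrightarrow> length EG = length EH \<and>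
     (\<forall>K \<subseteq> {..<length EG}.
        cycle_supported (uedge EG ` K) \<longleftrightarrow> cycle_supported (uedge EH ` K))"

end

theory Submission
  imports Defs
begin

inductive_set gen :: "nat set \<Rightarrow> nat \<Rightarrow> (complex list \<Rightarrow> (nat \<Rightarrow> complex) \<Rightarrow> complex) set"
  for C :: "nat set" and j :: nat where
  g_const: "(\<lambda>y a. c) \<in> gen C j"
| g_y: "i \<in> C \<Longrightarrow> (\<lambda>y a. y ! i) \<in> gen C j"
| g_a: "i < j \<Longrightarrow> (\<lambda>y a. a i) \<in> gen C j"
| g_add: "f \<in> gen C j \<Longrightarrow> g \<in> gen C j \<Longrightarrow> (\<lambda>y a. f y a + g y a) \<in> gen C j"
| g_mult: "f \<in> gen C j \<Longrightarrow> g \<in> gen C j \<Longrightarrow> (\<lambda>y a. f y a * g y a) \<in> gen C j"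

lemma gen_indep:
  assumes "h \<in> gen C j" "\<forall>i\<in>C. y ! i = y' ! i" "\<forall>i<j. a i = a' i"
  shows "h y a = h y' a'"
  using assms by (induction rule: gen.induct) auto

lemma gen_mono:
  assumes "h \<in> gen C j" "j \<le> j'" shows "h \<in> gen C j'"
  using assms by (induction rule: gen.induct) (auto intro: gen.intros)

lemma gen_poly:
  assumes "h \<in> gen C 0" "C \<subseteq> {..<m}"
  shows "(\<lambda>y. h y a0) \<in> poly_fun m"
  using assms by (induction rule: gen.induct) (auto intro: poly_fun.intros)

lemma gen_split:
  assumes "h \<in> gen C (Suc j)" "c \<in> C"
  shows "\<exists>A B. A \<in> gen C j \<and> B \<in> gen C j \<and>
     (\<forall>y a. (a j)^2 = y ! c \<longrightarrow> h y a = A y a + B y a * a j)"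
  using assms
proof (induction rule: gen.induct)
  case (g_const c')
  then show ?case by (intro exI[of _ "\<lambda>y a. c'"] exI[of _ "\<lambda>y a. 0"]) (auto intro: gen.intros)
next
  case (g_y i)
  then show ?case by (intro exI[of _ "\<lambda>y a. y ! i"] exI[of _ "\<lambda>y a. 0"]) (auto intro: gen.intros)
next
  case (g_a i)
  show ?case
  proof (cases "i < j")
    case True
    then show ?thesis by (intro exI[of _ "\<lambda>y a. a i"] exI[of _ "\<lambda>y a. 0"]) (auto intro: gen.intros)
  next
    case False
    then have "i = j" using g_a by simp
    then show ?thesis by (intro exI[of _ "\<lambda>y a. 0"] exI[of _ "\<lambda>y a. 1"]) (auto intro: gen.intros)
  qed
next
  case (g_add f g)
  then obtain A1 B1 A2 B2 where h: "A1 \<in> gen C j" "B1 \<in> gen C j" "A2 \<in> gen C j" "B2 \<in> gen C j"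
    "\<forall>y a. (a j)^2 = y ! c \<longrightarrow> f y a = A1 y a + B1 y a * a j"
    "\<forall>y a. (a j)^2 = y ! c \<longrightarrow> g y a = A2 y a + B2 y a * a j" by blast
  have "(\<lambda>y a. A1 y a + A2 y a) \<in> gen C j" "(\<lambda>y a. B1 y a + B2 y a) \<in> gen C j"
    using h by (auto intro: gen.intros)
  moreover have "\<forall>y a. (a j)^2 = y ! c \<longrightarrow> f y a + g y a = (A1 y a + A2 y a) + (B1 y a + B2 y a) * a j"
  proof (intro allI impI)
    fix y :: "complex list" and a :: "nat \<Rightarrow> complex" assume e: "(a j)^2 = y ! c"
    then show "f y a + g y a = (A1 y a + A2 y a) + (B1 y a + B2 y a) * a j"
      using h(5,6) by (simp add: algebra_simps)
  qed
  ultimately show ?case by blast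
next
  case (g_mult f g)
  then obtain A1 B1 A2 B2 where h: "A1 \<in> gen C j" "B1 \<in> gen C j" "A2 \<in> gen C j" "B2 \<in> gen C j"
    "\<forall>y a. (a j)^2 = y ! c \<longrightarrow> f y a = A1 y a + B1 y a * a j"
    "\<forall>y a. (a j)^2 = y ! c \<longrightarrow> g y a = A2 y a + B2 y a * a j" by blast
  have "(\<lambda>y a. A1 y a * A2 y a + (B1 y a * B2 y a) * y ! c) \<in> gen C j"
    using h g_mult.prems by (intro gen.intros) auto
  moreover have "(\<lambda>y a. A1 y a * B2 y a + B1 y a * A2 y a) \<in> gen C j"
    using h by (intro gen.intros) auto
  moreover have "\<forall>y a. (a j)^2 = y ! c \<longrightarrow> f y a * g y a =
      (A1 y a * A2 y a + (B1 y a * B2 y a) * y ! c) + (A1 y a * B2 y a + B1 y a * A2 y a) * a j"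
  proof (intro allI impI)
    fix y :: "complex list" and a :: "nat \<Rightarrow> complex" assume e: "(a j)^2 = y ! c"
    have "f y a * g y a = (A1 y a + B1 y a * a j) * (A2 y a + B2 y a * a j)" using h e by simp
    also have "\<dots> = A1 y a * A2 y a + (B1 y a * B2 y a) * (a j)^2 + (A1 y a * B2 y a + B1 y a * A2 y a) * a j"
      by (simp add: algebra_simps power2_eq_square)
    finally show "f y a * g y a =
      (A1 y a * A2 y a + (B1 y a * B2 y a) * y ! c) + (A1 y a * B2 y a + B1 y a * A2 y a) * a j"
      using e by simp
  qed
  ultimately show ?case by blast
qed

lemma gen_norm:
  assumes "h \<in> gen C (Suc j)" "c \<in> C"
  shows "\<exists>N \<in> gen C j. \<forall>y (a::nat\<Rightarrow>complex). (a j)^2 = y ! c \<longrightarrow> N y a = h y a * h y (a(j := - a j))"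
proof -
  obtain A B where AB: "A \<in> gen C j" "B \<in> gen C j"
     "\<forall>y a. (a j)^2 = y ! c \<longrightarrow> h y a = A y a + B y a * a j"
    using gen_split[OF assms] by blast
  have N: "(\<lambda>y a. A y a * A y a - B y a * B y a * y ! c) \<in> gen C j"
  proof -
    have "(\<lambda>y a. A y a * A y a + (-1) * (B y a * B y a * y ! c)) \<in> gen C j"
      using AB assms(2) by (intro g_add g_mult g_const g_y) auto
    then show ?thesis by simp
  qed
  show ?thesis
  proof (rule bexI[OF _ N], intro allI impI)
    fix y :: "complex list" and a :: "nat \<Rightarrow> complex" assume e: "(a j)^2 = y ! c"
    let ?a' = "a(j := - a j)"
    have e': "(?a' j)^2 = y ! c" using e by simp
    have i1: "A y ?a' = A y a" "B y ?a' = B y a"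
      using gen_indep[OF AB(1), of y y ?a' a] gen_indep[OF AB(2), of y y ?a' a] by auto
    have "h y ?a' = A y a - B y a * a j" using AB(3) e' i1 by simp
    moreover have "h y a = A y a + B y a * a j" using AB(3) e by simp
    ultimately have "h y a * h y ?a' = (A y a + B y a * a j) * (A y a - B y a * a j)"
      by simp
    also have "\<dots> = A y a * A y a - B y a * B y a * (a j)^2"
      by (simp add: algebra_simps power2_eq_square)
    finally have "h y a * h y ?a' = A y a * A y a - B y a * B y a * (a j)^2" .
    then show "A y a * A y a - B y a * B y a * y ! c = h y a * h y ?a'" using e by simp
  qed
qed


lemma gen_sum: "n' \<le> n \<Longrightarrow> (\<lambda>y a. \<Sum>i<n'. a i) \<in> gen C n"
proof (induction n')
  case 0 then show ?case using g_const[of 0] by simp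
next
  case (Suc n') then show ?case using g_add[OF Suc.IH g_a[of n' n C]] by simp
qed

lemma elim_main:
  fixes n :: nat and c :: "nat \<Rightarrow> nat" and y0 :: "complex list"
  assumes cC: "\<forall>i<n. c i \<in> C"
    and nz: "\<forall>a. (\<forall>i<n. (a i)^2 = y0 ! c i) \<longrightarrow> (\<Sum>i<n. a i) \<noteq> 0"
  shows "\<exists>g \<in> gen C 0. (\<forall>y a. (\<forall>i<n. (a i)^2 = y ! c i) \<and> (\<Sum>i<n. a i) = 0 \<longrightarrow> g y a = 0)
     \<and> (\<forall>a. (\<forall>i<n. (a i)^2 = y0 ! c i) \<longrightarrow> g y0 a \<noteq> 0)"
proof -
  define P where "P j \<longleftrightarrow> (\<exists>g \<in> gen C j. (\<forall>y a. (\<forall>i<n. (a i)^2 = y ! c i) \<and> (\<Sum>i<n. a i) = 0 \<longrightarrow> g y a = 0)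
     \<and> (\<forall>a. (\<forall>i<n. (a i)^2 = y0 ! c i) \<longrightarrow> g y0 a \<noteq> 0))" for j
  have "P n" unfolding P_def
    by (rule bexI[OF _ gen_sum[OF order_refl]]) (use nz in auto)
  have "P 0"
  proof (rule inc_induct[of 0 n P])
    show "P n" by fact
  next
    fix j assume j: "0 \<le> j" "j < n" and IH: "P (Suc j)"
    then obtain g where g: "g \<in> gen C (Suc j)"
      "\<forall>y a. (\<forall>i<n. (a i)^2 = y ! c i) \<and> (\<Sum>i<n. a i) = 0 \<longrightarrow> g y a = 0"
      "\<forall>a. (\<forall>i<n. (a i)^2 = y0 ! c i) \<longrightarrow> g y0 a \<noteq> 0" unfolding P_def by blast
    obtain N where N: "N \<in> gen C j"
      "\<forall>y (a::nat\<Rightarrow>complex). (a j)^2 = y ! c j \<longrightarrow> N y a = g y a * g y (a(j := - a j))"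
      using gen_norm[OF g(1), of "c j"] cC j by blast
    show "P j" unfolding P_def
    proof (rule bexI[OF _ N(1)], intro conjI allI impI)
      fix y and a :: "nat \<Rightarrow> complex"
      assume h: "(\<forall>i<n. (a i)^2 = y ! c i) \<and> (\<Sum>i<n. a i) = 0"
      then have "N y a = g y a * g y (a(j := - a j))" using N(2) j by auto
      also have "g y a = 0" using g(2) h by blast
      finally show "N y a = 0" by simp
    next
      fix a :: "nat \<Rightarrow> complex"
      assume h: "\<forall>i<n. (a i)^2 = y0 ! c i"
      have h': "\<forall>i<n. ((a(j := - a j)) i)^2 = y0 ! c i" using h by auto
      have "N y0 a = g y0 a * g y0 (a(j := - a j))" using N(2) h j by auto
      moreover have "g y0 a \<noteq> 0" "g y0 (a(j := - a j)) \<noteq> 0" using g(3) h h' by blast+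
      ultimately show "N y0 a \<noteq> 0" by simp
    qed
  qed simp
  then show ?thesis unfolding P_def .
qed


definition dep :: "complex list set \<Rightarrow> nat \<Rightarrow> nat set \<Rightarrow> bool" where
 "dep M m K \<longleftrightarrow> (\<exists>f\<in>poly_fun m. (\<forall>x y. length x = m \<longrightarrow> length y = m \<longrightarrow> (\<forall>k\<in>K. x!k = y!k) \<longrightarrow> f x = f y)
     \<and> (\<exists>x. length x = m \<and> f x \<noteq> 0) \<and> (\<forall>z\<in>M. f z = 0))"

definition realizable :: "('a \<times> 'a) list \<Rightarrow> nat set \<Rightarrow> bool" where
 "realizable E K \<longleftrightarrow> (\<forall>d::nat\<Rightarrow>complex. \<exists>p::'a\<Rightarrow>complex. \<forall>k\<in>K. p (fst (E!k)) - p (snd (E!k)) = d k)"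

lemma vanish_M1:
  assumes "f \<in> poly_fun (length E)"
  shows "(\<forall>z\<in>M1 V E. f z = 0) \<longleftrightarrow> (\<forall>z\<in>meas_image V E. f z = 0)"
proof
  assume h: "\<forall>z\<in>M1 V E. f z = 0"
  show "\<forall>z\<in>meas_image V E. f z = 0"
  proof
    fix z assume z: "z \<in> meas_image V E"
    then have "length z = length E" by (auto simp: meas_image_def meas_map_def)
    then have "z \<in> M1 V E" using z by (auto simp: M1_def zariski_closure_def)
    then show "f z = 0" using h by blast
  qed
next
  assume "\<forall>z\<in>meas_image V E. f z = 0"
  then show "\<forall>z\<in>M1 V E. f z = 0" using assms by (auto simp: M1_def zariski_closure_def)
qed

lemma meas_nth: "k < length E \<Longrightarrow> meas_map E p ! k = (p (fst (E!k)) - p (snd (E!k)))^2"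
  by (simp add: meas_map_def case_prod_beta)

lemma meas_len: "length (meas_map E p) = length E"
  by (simp add: meas_map_def)

lemma og_edge:
  assumes "ordered_graph V E" "k < length E"
  shows "fst (E!k) \<in> V" "snd (E!k) \<in> V" "fst (E!k) \<noteq> snd (E!k)"
proof -
  have "E!k \<in> set E" using assms(2) by simp
  then show "fst (E!k) \<in> V" "snd (E!k) \<in> V" "fst (E!k) \<noteq> snd (E!k)"
    using assms(1) unfolding ordered_graph_def by (auto simp: case_prod_beta)
qed

lemma uedge_inj:
  assumes "ordered_graph V E" "k < length E" "k' < length E" "uedge E k = uedge E k'"
  shows "k = k'"
proof -
  have d: "distinct (map (\<lambda>(i,j). {i,j}) E)" using assms(1) unfolding ordered_graph_def by blast
  have "map (\<lambda>(i,j). {i,j}) E ! k = map (\<lambda>(i,j). {i,j}) E ! k'"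
    using assms(2-4) by (simp add: uedge_def case_prod_beta)
  then show ?thesis using nth_eq_iff_index_eq[OF d] assms(2,3) by simp
qed

lemma sq_doubleton: "{a,b} = {c,d} \<Longrightarrow> ((p a - p b)::complex)^2 = (p c - p d)^2"
  by (auto simp: doubleton_eq_iff power2_eq_square algebra_simps)

lemma realizable_not_dep:
  assumes og: "ordered_graph V E" and K: "K \<subseteq> {..<length E}" and r: "realizable E K"
  shows "\<not> dep (M1 V E) (length E) K"
proof
  assume "dep (M1 V E) (length E) K"
  then obtain f x where f: "f \<in> poly_fun (length E)"
    "\<forall>x y. length x = length E \<longrightarrow> length y = length E \<longrightarrow> (\<forall>k\<in>K. x!k = y!k) \<longrightarrow> f x = f y"
    "length x = length E" "f x \<noteq> 0" "\<forall>z\<in>M1 V E. f z = 0"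
    unfolding dep_def by blast
  have van: "\<forall>z\<in>meas_image V E. f z = 0" using f(5) vanish_M1[OF f(1)] by blast
  have "\<exists>p::'a\<Rightarrow>complex. \<forall>k\<in>K. p (fst (E!k)) - p (snd (E!k)) = (\<lambda>k. csqrt (x!k)) k"
    using r[unfolded realizable_def, rule_format, of "\<lambda>k. csqrt (x!k)"] by blast
  then obtain p :: "'a \<Rightarrow> complex" where p: "\<forall>k\<in>K. p (fst (E!k)) - p (snd (E!k)) = csqrt (x!k)"
    by auto
  define p' where "p' v = (if v \<in> V then p v else 0)" for v
  have zin: "meas_map E p' \<in> meas_image V E" unfolding meas_image_def p'_def by auto
  have "\<forall>k\<in>K. meas_map E p' ! k = x ! k"
  proof
    fix k assume k: "k \<in> K"
    then have kl: "k < length E" using K by auto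
    have "meas_map E p' ! k = (p (fst (E!k)) - p (snd (E!k)))^2"
      using meas_nth[OF kl] og_edge[OF og kl] by (simp add: p'_def)
    also have "\<dots> = x ! k" using p k by simp
    finally show "meas_map E p' ! k = x ! k" .
  qed
  then have "f x = f (meas_map E p')" using f(2,3) meas_len by metis
  then show False using van zin f(4) by simp
qed

lemma telescope:
  fixes n :: nat
  assumes "n \<ge> 1"
  shows "(\<Sum>i<n. (f i - f ((i+1) mod n)) :: complex) = 0"
proof -
  obtain n' where n: "n = Suc n'" using assms by (cases n) auto
  have "(\<Sum>i<n. f ((i+1) mod n)) = (\<Sum>i<n'. f (Suc i)) + f 0"
  proof -
    have "(\<Sum>i<n'. f ((i+1) mod n)) = (\<Sum>i<n'. f (Suc i))"
      by (rule sum.cong) (auto simp: n)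
    then show ?thesis by (simp add: n)
  qed
  moreover have "(\<Sum>i<n. f i) = f 0 + (\<Sum>i<n'. f (Suc i))"
    unfolding n by (rule sum.lessThan_Suc_shift)
  ultimately show ?thesis by (simp add: sum_subtractf)
qed

lemma cycle_dep:
  assumes og: "ordered_graph V E" and K: "K \<subseteq> {..<length E}"
    and cs: "cycle_supported (uedge E ` K)"
  shows "dep (M1 V E) (length E) K"
proof -
  define m where "m = length E"
  obtain vs where vs: "length vs \<ge> 3" "distinct vs"
     "uedge E ` K = {{vs ! i, vs ! ((i + 1) mod length vs)} | i. i < length vs}"
    using cs unfolding cycle_supported_def by blast
  define n where "n = length vs"
  define ed where "ed i = {vs ! i, vs ! ((i + 1) mod n)}" for i
  have "\<forall>i<n. \<exists>k\<in>K. uedge E k = ed i"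
  proof (intro allI impI)
    fix i assume "i < n"
    then have "ed i \<in> uedge E ` K" using vs(3) unfolding ed_def n_def by blast
    then show "\<exists>k\<in>K. uedge E k = ed i" by auto
  qed
  then obtain c where c: "\<forall>i<n. c i \<in> K \<and> uedge E (c i) = ed i" by metis
  have n3: "n \<ge> 3" using vs(1) n_def by simp
  have cne: "c i \<noteq> c 0" if i: "0 < i" "i < n" for i
  proof
    have l0: "0 < length vs" "1 < length vs" "2 < length vs" "i < length vs" using n3 n_def i by auto
    assume "c i = c 0"
    then have e: "ed i = ed 0" using c i by (metis gr_implies_not0 neq0_conv)
    have ed0: "ed 0 = {vs!0, vs!1}" using n3 by (simp add: ed_def)
    have "vs ! i \<in> ed i" unfolding ed_def by simp
    then have "vs ! i \<in> {vs!0, vs!1}" using e ed0 by simp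
    moreover have "vs ! i = vs ! 0 \<Longrightarrow> i = 0"
      using nth_eq_iff_index_eq[OF vs(2) l0(4) l0(1)] by simp
    moreover have "vs ! i = vs ! 1 \<Longrightarrow> i = 1"
      using nth_eq_iff_index_eq[OF vs(2) l0(4) l0(2)] by simp
    ultimately have "i = 0 \<or> i = 1" by blast
    then have "i = 1" using i by simp
    then have "vs ! ((1+1) mod n) \<in> ed i" unfolding ed_def by simp
    moreover have "(1+1) mod n = 2" using n3 by simp
    ultimately have "vs ! 2 \<in> {vs!0, vs!1}" using e ed0 \<open>i = 1\<close> by simp
    moreover have "vs ! 2 \<noteq> vs ! 0" using nth_eq_iff_index_eq[OF vs(2) l0(3) l0(1)] by simp
    moreover have "vs ! 2 \<noteq> vs ! 1" using nth_eq_iff_index_eq[OF vs(2) l0(3) l0(2)] by simp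
    ultimately show False by blast
  qed
  define C where "C = c ` {..<n}"
  have CK: "C \<subseteq> K" using c C_def by auto
  have Cm: "C \<subseteq> {..<m}" using CK K m_def by auto
  define y0 where "y0 = map (\<lambda>k. if k = c 0 then (1::complex) else 0) [0..<m]"
  have c0m: "c 0 < m"
  proof -
    have "c 0 \<in> C" using C_def n3 by auto
    then show ?thesis using Cm by auto
  qed
  have y0c: "y0 ! c i = (if i = 0 then 1 else 0)" if "i < n" for i
  proof -
    have "c i < m" using that Cm C_def by auto
    then show ?thesis using cne[of i] that by (auto simp: y0_def)
  qed
  have nz: "\<forall>a. (\<forall>i<n. (a i)^2 = y0 ! c i) \<longrightarrow> (\<Sum>i<n. a i) \<noteq> 0"
  proof (intro allI impI)
    fix a :: "nat \<Rightarrow> complex" assume h: "\<forall>i<n. (a i)^2 = y0 ! c i"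
    have a0: "(a 0)^2 = 1" using h y0c[of 0] n3 by auto
    have "\<forall>i<n. a i = (if i = 0 then a 0 else 0)" using h y0c by auto
    then have "(\<Sum>i<n. a i) = (\<Sum>i<n. (if i = 0 then a 0 else 0))" by (intro sum.cong) auto
    also have "\<dots> = a 0" using n3 by (simp add: sum.delta)
    finally show "(\<Sum>i<n. a i) \<noteq> 0" using a0 by auto
  qed
  obtain g where g: "g \<in> gen C 0"
    "\<forall>y a. (\<forall>i<n. (a i)^2 = y ! c i) \<and> (\<Sum>i<n. a i) = 0 \<longrightarrow> g y a = 0"
    "\<forall>a. (\<forall>i<n. (a i)^2 = y0 ! c i) \<longrightarrow> g y0 a \<noteq> 0"
    using elim_main[of n c C y0] nz C_def by blast
  define F where "F y = g y (\<lambda>_. 0)" for y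
  have F1: "F \<in> poly_fun m" unfolding F_def using gen_poly[OF g(1) Cm] .
  have F2: "\<forall>x y. length x = m \<longrightarrow> length y = m \<longrightarrow> (\<forall>k\<in>K. x!k = y!k) \<longrightarrow> F x = F y"
    unfolding F_def using gen_indep[OF g(1)] CK by blast
  have F3: "\<exists>x. length x = m \<and> F x \<noteq> 0"
  proof (intro exI conjI)
    show "length y0 = m" by (simp add: y0_def)
    define a0 where "a0 i = (if i = 0 then (1::complex) else 0)" for i :: nat
    have "\<forall>i<n. (a0 i)^2 = y0 ! c i" using y0c by (simp add: a0_def)
    then have "g y0 a0 \<noteq> 0" using g(3) by blast
    moreover have "g y0 a0 = F y0" unfolding F_def using gen_indep[OF g(1)] by blast
    ultimately show "F y0 \<noteq> 0" by simp
  qed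
  have F4: "\<forall>z\<in>meas_image V E. F z = 0"
  proof
    fix z assume "z \<in> meas_image V E"
    then obtain p where z: "z = meas_map E p" unfolding meas_image_def by blast
    define a where "a i = p (vs!i) - p (vs!((i+1) mod n))" for i :: nat
    have "\<forall>i<n. (a i)^2 = z ! c i"
    proof (intro allI impI)
      fix i assume i: "i < n"
      have cm: "c i < length E" using Cm C_def i m_def by auto
      have "z ! c i = (p (fst (E!c i)) - p (snd (E!c i)))^2" using z meas_nth[OF cm] by simp
      also have "\<dots> = (a i)^2" unfolding a_def
        by (rule sq_doubleton) (use c i in \<open>simp add: uedge_def ed_def\<close>)
      finally show "(a i)^2 = z ! c i" by simp
    qed
    moreover have "(\<Sum>i<n. a i) = 0" unfolding a_def using telescope[of n "\<lambda>i. p (vs!i)"] n3 by simp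
    ultimately have "g z a = 0" using g(2) by blast
    moreover have "g z a = F z" unfolding F_def using gen_indep[OF g(1)] by blast
    ultimately show "F z = 0" by simp
  qed
  have F4': "\<forall>z\<in>M1 V E. F z = 0" using vanish_M1[of F E V] F1 F4 m_def by simp
  show ?thesis unfolding dep_def m_def[symmetric] using F1 F2 F3 F4' by blast
qed


lemma realizable_mono: "K' \<subseteq> K \<Longrightarrow> realizable E K \<Longrightarrow> realizable E K'"
  unfolding realizable_def by blast

lemma realizable_empty: "realizable E {}"
  unfolding realizable_def by blast

lemma realizable_leaf:
  assumes og: "ordered_graph V E" and r: "realizable E K" and k: "k < length E"
    and v: "v \<in> uedge E k" and fresh: "\<forall>k'\<in>K. v \<notin> uedge E k'"
  shows "realizable E (insert k K)"
  unfolding realizable_def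
proof
  fix d :: "nat \<Rightarrow> complex"
  obtain p where p: "\<forall>k\<in>K. p (fst (E!k)) - p (snd (E!k)) = d k"
    using r unfolding realizable_def by blast
  have ne: "fst (E!k) \<noteq> snd (E!k)" using og_edge[OF og k] by simp
  define p' where "p' = (if v = fst (E!k) then p(v := p (snd (E!k)) + d k) else p(v := p (fst (E!k)) - d k))"
  have old: "p' (fst (E!k')) = p (fst (E!k'))" "p' (snd (E!k')) = p (snd (E!k'))" if "k' \<in> K" for k'
    using fresh that unfolding p'_def uedge_def by auto
  have vk: "v = fst (E!k) \<or> v = snd (E!k)" using v unfolding uedge_def by auto
  have new: "p' (fst (E!k)) - p' (snd (E!k)) = d k"
    using vk ne unfolding p'_def by auto
  show "\<exists>p. \<forall>k\<in>insert k K. p (fst (E!k)) - p (snd (E!k)) = d k"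
    by (rule exI[of _ p']) (use p old new in auto)
qed

definition pathK :: "('a \<times> 'a) list \<Rightarrow> 'a list \<Rightarrow> nat set" where
  "pathK E ws = {k. k < length E \<and> (\<exists>i. Suc i < length ws \<and> uedge E k = {ws!i, ws!Suc i})}"

lemma realizable_path:
  assumes og: "ordered_graph V E"
  shows "distinct ws \<Longrightarrow> realizable E (pathK E ws)"
proof (induction ws rule: rev_induct)
  case Nil
  then show ?case using realizable_empty by (simp add: pathK_def)
next
  case (snoc w ws)
  have r: "realizable E (pathK E ws)" using snoc by simp
  have wn: "w \<notin> set ws" using snoc.prems by simp
  have sub: "pathK E (ws @ [w]) \<subseteq> pathK E ws \<union> {k. k < length E \<and> uedge E k = {last ws, w}}"
  proof
    fix k assume "k \<in> pathK E (ws @ [w])"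
    then obtain i where k: "k < length E" "Suc i < Suc (length ws)" "uedge E k = {(ws @ [w])!i, (ws @ [w])!Suc i}"
      unfolding pathK_def by auto
    show "k \<in> pathK E ws \<union> {k. k < length E \<and> uedge E k = {last ws, w}}"
    proof (cases "Suc i < length ws")
      case True
      then have "uedge E k = {ws!i, ws!Suc i}" using k by (simp add: nth_append)
      then show ?thesis using True k unfolding pathK_def by auto
    next
      case False
      then have si: "Suc i = length ws" using k by simp
      then have "ws ! i = last ws" by (metis diff_Suc_1 last_conv_nth length_0_conv nat.distinct(1))
      then have "uedge E k = {last ws, w}" using k si by (simp add: nth_append)
      then show ?thesis using k by auto
    qed
  qed
  show ?case
  proof (cases "\<exists>k0. k0 < length E \<and> uedge E k0 = {last ws, w}")
    case False
    then have "pathK E (ws @ [w]) \<subseteq> pathK E ws" using sub by auto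
    then show ?thesis using realizable_mono r by blast
  next
    case True
    then obtain k0 where k0: "k0 < length E" "uedge E k0 = {last ws, w}" by blast
    have "{k. k < length E \<and> uedge E k = {last ws, w}} = {k0}"
      using k0 uedge_inj[OF og] by auto
    then have s2: "pathK E (ws @ [w]) \<subseteq> insert k0 (pathK E ws)" using sub by auto
    have fresh: "\<forall>k'\<in>pathK E ws. w \<notin> uedge E k'"
    proof
      fix k' assume "k' \<in> pathK E ws"
      then obtain i where "Suc i < length ws" "uedge E k' = {ws!i, ws!Suc i}" unfolding pathK_def by auto
      then have "uedge E k' \<subseteq> set ws" by auto
      then show "w \<notin> uedge E k'" using wn by auto
    qed
    have "realizable E (insert k0 (pathK E ws))"
      by (rule realizable_leaf[OF og r k0(1) _ fresh]) (simp add: k0)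
    then show ?thesis using realizable_mono s2 by blast
  qed
qed

lemma cycle_minus_realizable:
  assumes og: "ordered_graph V E" and K: "K \<subseteq> {..<length E}"
    and cs: "cycle_supported (uedge E ` K)" and K': "K' \<subset> K"
  shows "realizable E K'"
proof -
  obtain vs where vs: "length vs \<ge> 3" "distinct vs"
     "uedge E ` K = {{vs ! i, vs ! ((i + 1) mod length vs)} | i. i < length vs}"
    using cs unfolding cycle_supported_def by blast
  define n where "n = length vs"
  obtain k0 where k0: "k0 \<in> K" "k0 \<notin> K'" using K' by blast
  then have "uedge E k0 \<in> uedge E ` K" by blast
  then obtain j where j: "j < n" "uedge E k0 = {vs ! j, vs ! ((j + 1) mod n)}"
    using vs(3) n_def by auto
  define ws where "ws = rotate (Suc j) vs"
  have wsd: "distinct ws" "length ws = n" using vs(2) n_def by (auto simp: ws_def)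
  have wsn: "ws ! i = vs ! ((Suc j + i) mod n)" if "i < n" for i
    using nth_rotate[of i vs "Suc j"] that n_def by (simp add: ws_def)
  have "K' \<subseteq> pathK E ws"
  proof
    fix k assume kK': "k \<in> K'"
    then have kK: "k \<in> K" using K' by auto
    then have km: "k < length E" using K by auto
    have "uedge E k \<in> uedge E ` K" using kK by blast
    then obtain i' where i': "i' < n" "uedge E k = {vs ! i', vs ! ((i' + 1) mod n)}"
      using vs(3) n_def by auto
    have ij: "i' \<noteq> j"
    proof
      assume "i' = j"
      then have "uedge E k = uedge E k0" using i' j by simp
      then have "k = k0" using uedge_inj[OF og km] k0 K by auto
      then show False using kK' k0 by simp
    qed
    define i where "i = (i' + n - Suc j) mod n"
    have n0: "0 < n" using j by simp
    have iln: "i < n" using n0 by (simp add: i_def)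
    have e1: "(Suc j + i) mod n = i'"
    proof -
      have "(Suc j + i) mod n = (Suc j + (i' + n - Suc j)) mod n" unfolding i_def by (rule mod_add_right_eq)
      also have "Suc j + (i' + n - Suc j) = i' + n" using j by simp
      finally show ?thesis using i' by simp
    qed
    have iS: "Suc i < n"
    proof (rule ccontr)
      assume "\<not> Suc i < n"
      then have "i = n - 1" using iln by simp
      then have "(Suc j + i) mod n = (j + n) mod n" using n0 by (simp add: algebra_simps)
      then have "i' = j" using e1 j by simp
      then show False using ij by simp
    qed
    have e2: "(Suc j + Suc i) mod n = (i' + 1) mod n"
    proof -
      have "(Suc j + Suc i) mod n = ((Suc j + i) + 1) mod n" by simp
      also have "\<dots> = ((Suc j + i) mod n + 1) mod n" by (rule mod_add_left_eq[symmetric])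
      finally show ?thesis using e1 by simp
    qed
    have "uedge E k = {ws ! i, ws ! Suc i}" using i' wsn[OF iln] wsn[OF iS] e1 e2 by simp
    then show "k \<in> pathK E ws" unfolding pathK_def using km iS wsd by auto
  qed
  then show ?thesis using realizable_path[OF og wsd(1)] realizable_mono by blast
qed


lemma walk_rtrancl:
  assumes "(v,u) \<in> R\<^sup>*"
  shows "\<exists>ws. ws \<noteq> [] \<and> hd ws = v \<and> last ws = u \<and> successively (\<lambda>a b. (a,b)\<in>R) ws"
  using assms
proof (induction rule: rtrancl_induct)
  case base
  then show ?case by (intro exI[of _ "[v]"]) auto
next
  case (step y z)
  then obtain ws where ws: "ws \<noteq> []" "hd ws = v" "last ws = y" "successively (\<lambda>a b. (a,b)\<in>R) ws" by blast
  show ?case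
    by (rule exI[of _ "ws @ [z]"]) (use ws step(2) in \<open>auto simp: successively_append_iff\<close>)
qed

lemma walk_distinct:
  "ws \<noteq> [] \<Longrightarrow> successively P ws \<Longrightarrow>
   \<exists>ws'. ws' \<noteq> [] \<and> hd ws' = hd ws \<and> last ws' = last ws \<and> successively P ws' \<and> distinct ws'"
proof (induction ws rule: length_induct)
  case (1 ws)
  show ?case
  proof (cases "distinct ws")
    case True
    then show ?thesis using 1 by blast
  next
    case False
    then obtain xs ys zs y where ws: "ws = xs @ [y] @ ys @ [y] @ zs" using not_distinct_decomp by blast
    define ws2 where "ws2 = xs @ [y] @ zs"
    have l: "length ws2 < length ws" unfolding ws2_def ws by simp
    have s: "successively P ws2"
      using "1.prems"(2) unfolding ws ws2_def
      by (auto simp: successively_append_iff successively_Cons split: if_splits)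
    have ne: "ws2 \<noteq> []" by (simp add: ws2_def)
    have h: "hd ws2 = hd ws" "last ws2 = last ws" unfolding ws2_def ws
      by (cases xs; simp) (cases zs; simp)
    obtain ws' where "ws' \<noteq> []" "hd ws' = hd ws2" "last ws' = last ws2" "successively P ws'" "distinct ws'"
      using "1.IH" l ne s by blast
    then show ?thesis using h by metis
  qed
qed

lemma acyclic_realizable:
  assumes og: "ordered_graph V E"
  shows "finite K \<Longrightarrow> K \<subseteq> {..<length E} \<Longrightarrow> (\<forall>K'\<subseteq>K. \<not> cycle_supported (uedge E ` K')) \<Longrightarrow> realizable E K"
proof (induction K rule: finite_induct)
  case empty
  then show ?case using realizable_empty by blast
next
  case (insert k K)
  have r: "realizable E K" using insert by auto
  have km: "k < length E" using insert by auto
  define u where "u = fst (E!k)"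
  define v where "v = snd (E!k)"
  have uv: "u \<noteq> v" using og_edge[OF og km] u_def v_def by simp
  have uek: "uedge E k = {u,v}" by (simp add: uedge_def u_def v_def)
  define R where "R = {(a,b). \<exists>k'\<in>K. uedge E k' = {a,b}}"
  define Cs where "Cs = {w. (v,w) \<in> R\<^sup>*}"
  have uC: "u \<notin> Cs"
  proof
    assume "u \<in> Cs"
    then have "(v,u) \<in> R\<^sup>*" unfolding Cs_def by simp
    then obtain ws0 where "ws0 \<noteq> []" "hd ws0 = v" "last ws0 = u" "successively (\<lambda>a b. (a,b)\<in>R) ws0"
      using walk_rtrancl by metis
    then obtain ws where ws: "ws \<noteq> []" "hd ws = v" "last ws = u" "successively (\<lambda>a b. (a,b)\<in>R) ws" "distinct ws"
      using walk_distinct[of ws0 "\<lambda>a b. (a,b)\<in>R"] by metis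
    define n where "n = length ws"
    have hd0: "ws ! 0 = v" using ws by (simp add: hd_conv_nth)
    have lastn: "ws ! (n - 1) = u" using ws by (simp add: last_conv_nth n_def)
    have n2: "n \<ge> 2"
    proof (rule ccontr)
      assume "\<not> n \<ge> 2"
      moreover have "n \<noteq> 0" using ws n_def by simp
      ultimately have "n = 1" by simp
      then show False using hd0 lastn uv by simp
    qed
    have n3: "n \<ge> 3"
    proof (rule ccontr)
      assume "\<not> n \<ge> 3"
      then have n: "n = 2" using n2 by simp
      have "(ws!0, ws!Suc 0) \<in> R" using successively_nth[OF ws(4), of 0] n n_def by simp
      moreover have "ws ! Suc 0 = u" using lastn n by simp
      ultimately obtain k' where k': "k' \<in> K" "uedge E k' = {v,u}" using hd0 unfolding R_def by auto
      then have "uedge E k' = uedge E k" using uek by auto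
      moreover have "k' < length E" using k' insert by auto
      ultimately have "k' = k" using uedge_inj[OF og _ km] by blast
      then show False using k' insert by simp
    qed
    define S where "S = {{ws ! i, ws ! ((i + 1) mod n)} | i. i < n}"
    have csS: "cycle_supported S" unfolding cycle_supported_def S_def
      using n3 ws(5) n_def by blast
    have Ssub: "S \<subseteq> uedge E ` insert k K"
    proof
      fix e assume "e \<in> S"
      then obtain i where i: "i < n" "e = {ws ! i, ws ! ((i + 1) mod n)}" unfolding S_def by blast
      show "e \<in> uedge E ` insert k K"
      proof (cases "Suc i < n")
        case True
        then have "(i+1) mod n = Suc i" by simp
        moreover have "(ws!i, ws!Suc i) \<in> R" using successively_nth[OF ws(4), of i] True n_def by simp
        ultimately obtain k' where "k' \<in> K" "uedge E k' = e" using i unfolding R_def by auto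
        then show ?thesis by blast
      next
        case False
        then have "i = n - 1" using i by simp
        moreover have "(n - 1 + 1) mod n = 0" using n3 by simp
        ultimately have "e = {u, v}" using i hd0 lastn by simp
        then show ?thesis using uek by blast
      qed
    qed
    define K2 where "K2 = {k' \<in> insert k K. uedge E k' \<in> S}"
    have "uedge E ` K2 = S" using Ssub unfolding K2_def by blast
    moreover have "K2 \<subseteq> insert k K" unfolding K2_def by blast
    ultimately show False using insert.prems(2) csS by metis
  qed
  show ?case unfolding realizable_def
  proof
    fix d :: "nat \<Rightarrow> complex"
    obtain p where p: "\<forall>k\<in>K. p (fst (E!k)) - p (snd (E!k)) = d k"
      using r unfolding realizable_def by blast
    define p' where "p' w = p w + (if w \<in> Cs then p u - p v - d k else 0)" for w
    have vC: "v \<in> Cs" unfolding Cs_def by simp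
    have old: "p' (fst (E!k')) - p' (snd (E!k')) = d k'" if k': "k' \<in> K" for k'
    proof -
      let ?a = "fst (E!k')" and ?b = "snd (E!k')"
      have "uedge E k' = {?a, ?b}" "uedge E k' = {?b, ?a}" by (auto simp: uedge_def)
      then have "(?a, ?b) \<in> R" "(?b, ?a) \<in> R" using k' unfolding R_def by blast+
      then have "?a \<in> Cs \<longleftrightarrow> ?b \<in> Cs" unfolding Cs_def by (meson mem_Collect_eq rtrancl.rtrancl_into_rtrancl)
      then show ?thesis using p k' unfolding p'_def by auto
    qed
    have new: "p' u - p' v = d k" using uC vC unfolding p'_def by simp
    show "\<exists>p. \<forall>k'\<in>insert k K. p (fst (E!k')) - p (snd (E!k')) = d k'"
      by (rule exI[of _ p']) (use old new u_def v_def in auto)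
  qed
qed

definition char_set :: "complex list set \<Rightarrow> nat \<Rightarrow> nat set \<Rightarrow> bool" where
  "char_set M m K \<longleftrightarrow> dep M m K \<and> (\<forall>K'. K' \<subset> K \<longrightarrow> \<not> dep M m K')"

lemma cycle_char:
  assumes og: "ordered_graph V E" and K: "K \<subseteq> {..<length E}"
  shows "cycle_supported (uedge E ` K) \<longleftrightarrow> char_set (M1 V E) (length E) K"
proof
  assume cs: "cycle_supported (uedge E ` K)"
  show "char_set (M1 V E) (length E) K" unfolding char_set_def
  proof (intro conjI allI impI)
    show "dep (M1 V E) (length E) K" using cycle_dep[OF og K cs] .
  next
    fix K' assume K': "K' \<subset> K"
    then have "realizable E K'" using cycle_minus_realizable[OF og K cs] by blast
    then show "\<not> dep (M1 V E) (length E) K'" using realizable_not_dep[OF og] K' K by blast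
  qed
next
  assume ch: "char_set (M1 V E) (length E) K"
  have fin: "finite K" using K finite_subset by blast
  have "\<exists>K'\<subseteq>K. cycle_supported (uedge E ` K')"
  proof (rule ccontr)
    assume "\<not> ?thesis"
    then have "realizable E K" using acyclic_realizable[OF og fin K] by blast
    then show False using realizable_not_dep[OF og K] ch unfolding char_set_def by blast
  qed
  then obtain K' where K': "K' \<subseteq> K" "cycle_supported (uedge E ` K')" by blast
  have "dep (M1 V E) (length E) K'" using cycle_dep[OF og _ K'(2)] K' K by blast
  then have "K' = K" using K' ch unfolding char_set_def by blast
  then show "cycle_supported (uedge E ` K)" using K' by simp
qed

theorem mainTheorem14:
  fixes VG :: "'a set" and EG :: "('a \<times> 'a) list"
    and VH :: "'b set" and EH :: "('b \<times> 'b) list" and m :: nat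
  assumes "ordered_graph VG EG" and "ordered_graph VH EH"
    and "length EG = m" and "length EH = m"
    and "M1 VG EG = M1 VH EH"
  shows "index_cycle_iso EG EH"
  unfolding index_cycle_iso_def
proof (intro conjI allI impI)
  show "length EG = length EH" using assms by simp
next
  fix K assume K: "K \<subseteq> {..<length EG}"
  have KH: "K \<subseteq> {..<length EH}" using K assms by simp
  show "cycle_supported (uedge EG ` K) = cycle_supported (uedge EH ` K)"
    using cycle_char[OF assms(1) K] cycle_char[OF assms(2) KH] assms(3-5) by simp
qed

end
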